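(* Let $A$ be a locally uniformly convex normed vector space over $\mathbb C$ and give $A^\vee$ the dual norm. Then on $\mathrm{Max}\,A$ the lower Vietoris topology coincides with the topology generated by the sets $\{V\in\mathrm{Max}\,A: d(\phi,F(V))>r\}$, $\phi\in A^\vee$, $r>0$.
   Context: $\mathrm{Max}\,A$ is the set of closed subspaces of $A$; its lower Vietoris topology is generated by $\{V:V\cap U\ne\emptyset\}$, $U\subset A$ open. $F(V)=\{\phi\in A^\vee:\phi|_V=0\}$ and $d$ is the distance in the dual norm. $A$ is locally uniformly convex if for all $a\in A$ and sequences $(a_n)$ in $A$, $\lim(2\|a\|^2+2\|a_n\|^2-\|a+a_n\|^2)=0$ implies $\lim\|a-a_n\|=0$. *)

theory Defs
  imports "HOL-Analysis.Analysis"
begin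

definition complex_normed_structure :: "(complex \<Rightarrow> 'a::real_normed_vector \<Rightarrow> 'a) \<Rightarrow> bool" where
  "complex_normed_structure smul \<longleftrightarrow>
     (\<forall>r x. smul (complex_of_real r) x = r *\<^sub>R x) \<and>
     (\<forall>a b x. smul (a + b) x = smul a x + smul b x) \<and>
     (\<forall>a x y. smul a (x + y) = smul a x + smul a y) \<and>
     (\<forall>a b x. smul (a * b) x = smul a (smul b x)) \<and>
     (\<forall>a x. norm (smul a x) = cmod a * norm x)"

definition loc_unif_convex :: "'a::real_normed_vector itself \<Rightarrow> bool" where
  "loc_unif_convex _ \<longleftrightarrow>
     (\<forall>(a::'a) an. (\<lambda>n. 2 * (norm a)\<^sup>2 + 2 * (norm (an n))\<^sup>2 - (norm (a + an n))\<^sup>2) \<longlonglongrightarrow> 0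
        \<longrightarrow> (\<lambda>n. norm (a - an n)) \<longlonglongrightarrow> 0)"

definition cdual :: "(complex \<Rightarrow> 'a::real_normed_vector \<Rightarrow> 'a) \<Rightarrow> ('a \<Rightarrow> complex) set" where
  "cdual smul = {\<phi>. (\<forall>x y. \<phi> (x + y) = \<phi> x + \<phi> y) \<and> (\<forall>c x. \<phi> (smul c x) = c * \<phi> x)
                   \<and> (\<exists>K. \<forall>x. cmod (\<phi> x) \<le> K * norm x)}"

definition MaxA :: "(complex \<Rightarrow> 'a::real_normed_vector \<Rightarrow> 'a) \<Rightarrow> 'a set set" where
  "MaxA smul = {V. closed V \<and> 0 \<in> V \<and> (\<forall>x\<in>V. \<forall>y\<in>V. x + y \<in> V) \<and> (\<forall>c. \<forall>x\<in>V. smul c x \<in> V)}"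

definition annih :: "(complex \<Rightarrow> 'a::real_normed_vector \<Rightarrow> 'a) \<Rightarrow> 'a set \<Rightarrow> ('a \<Rightarrow> complex) set" where
  "annih smul V = {\<psi> \<in> cdual smul. \<forall>v\<in>V. \<psi> v = 0}"

definition dual_dist :: "('a::real_normed_vector \<Rightarrow> complex) \<Rightarrow> ('a \<Rightarrow> complex) set \<Rightarrow> real" where
  "dual_dist \<phi> S = Inf {onorm (\<lambda>x. \<phi> x - \<psi> x) | \<psi>. \<psi> \<in> S}"

definition topology_on_generated :: "'b set \<Rightarrow> 'b set set \<Rightarrow> 'b topology" where
  "topology_on_generated X S = topology_generated_by (insert X S)"

end

theory Submission
  imports Defs
begin


definition okG :: "real \<Rightarrow> 'a::real_normed_vector set \<Rightarrow> ('a \<Rightarrow> real) \<Rightarrow> ('a \<times> real) set \<Rightarrow> bool" where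
 "okG c V f G \<longleftrightarrow>
   (\<forall>x a b. (x,a)\<in>G \<longrightarrow> (x,b)\<in>G \<longrightarrow> a=b) \<and>
   (\<forall>x a y b. (x,a)\<in>G \<longrightarrow> (y,b)\<in>G \<longrightarrow> (x+y,a+b)\<in>G) \<and>
   (\<forall>r x a. (x,a)\<in>G \<longrightarrow> (r *\<^sub>R x, r*a)\<in>G) \<and>
   (\<forall>x a. (x,a)\<in>G \<longrightarrow> a \<le> c * norm x) \<and>
   (\<forall>x\<in>V. (x, f x) \<in> G)"

lemma okG_ext:
  fixes M :: "('a::real_normed_vector \<times> real) set"
  assumes ok: "okG c V f M" and c: "c \<ge> 0" and V: "0 \<in> V"
    and x0: "\<forall>a. (x0,a) \<notin> M"
  shows "\<exists>M'. okG c V f M' \<and> M \<subset> M'"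
proof -
  have funM: "\<And>x a b. (x,a)\<in>M \<Longrightarrow> (x,b)\<in>M \<Longrightarrow> a=b"
   and add: "\<And>x a y b. (x,a)\<in>M \<Longrightarrow> (y,b)\<in>M \<Longrightarrow> (x+y,a+b)\<in>M"
   and scl: "\<And>r x a. (x,a)\<in>M \<Longrightarrow> (r *\<^sub>R x, r*a)\<in>M"
   and dom: "\<And>x a. (x,a)\<in>M \<Longrightarrow> a \<le> c * norm x"
   and inV: "\<And>x. x\<in>V \<Longrightarrow> (x, f x) \<in> M"
    using ok unfolding okG_def by blast+
  have z: "(0,0) \<in> M" using scl[OF inV[OF V], of 0] by simp
  define T where "T = {b - c * norm (y - x0) | y b. (y,b)\<in>M}"
  define a0 where "a0 = Sup T"
  have key: "b - c * norm (y - x0) \<le> c * norm (z + x0) - e" if "(y,b)\<in>M" "(z,e)\<in>M" for y b z e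
  proof -
    have "b + e \<le> c * norm (y + z)" using dom[OF add[OF that]] .
    also have "norm (y + z) \<le> norm (y - x0) + norm (z + x0)"
      using norm_triangle_ineq[of "y - x0" "z + x0"] by simp
    hence "c * norm (y + z) \<le> c * norm (y - x0) + c * norm (z + x0)"
      using c by (metis distrib_left mult_left_mono)
    finally show ?thesis by simp
  qed
  have Tne: "T \<noteq> {}" using z unfolding T_def by blast
  have Tbd: "bdd_above T" unfolding T_def bdd_above_def using key[OF _ z] by auto
  have P1: "b - c * norm (y - x0) \<le> a0" if "(y,b)\<in>M" for y b
    unfolding a0_def using that Tbd by (intro cSup_upper) (auto simp: T_def)
  have P2: "a0 \<le> c * norm (z + x0) - e" if "(z,e)\<in>M" for z e
    unfolding a0_def using Tne that key by (intro cSup_least) (auto simp: T_def)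
  define M' where "M' = {(y + t *\<^sub>R x0, b + t * a0) | y b t. (y,b)\<in>M}"
  have MM': "M \<subseteq> M'" unfolding M'_def by force
  have new: "(x0, a0) \<in> M'" unfolding M'_def using z by force
  have "okG c V f M'"
    unfolding okG_def
  proof (intro conjI allI impI ballI)
    fix x a b assume A: "(x,a)\<in>M'" "(x,b)\<in>M'"
    then obtain y1 b1 t1 y2 b2 t2 where e: "(y1,b1)\<in>M" "(y2,b2)\<in>M"
      "x = y1 + t1 *\<^sub>R x0" "a = b1 + t1*a0" "x = y2 + t2 *\<^sub>R x0" "b = b2 + t2*a0"
      unfolding M'_def by blast
    have t: "t1 = t2"
    proof (rule ccontr)
      assume "t1 \<noteq> t2"
      have d: "(y2 - y1, b2 - b1) \<in> M" using add[OF e(2) scl[OF e(1), of "-1"]] by simp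
      have "(y2 - y1) = (t1 - t2) *\<^sub>R x0" using e(3,5) by (simp add: algebra_simps)
      hence "x0 = (1/(t1-t2)) *\<^sub>R (y2 - y1)" using \<open>t1\<noteq>t2\<close> by simp
      thus False using scl[OF d, of "1/(t1-t2)"] x0 by metis
    qed
    hence "y1 = y2" using e by simp
    thus "a = b" using funM[OF e(1)] e t by simp
  next
    fix x a y b assume "(x,a)\<in>M'" "(y,b)\<in>M'"
    then obtain y1 b1 t1 y2 b2 t2 where e: "(y1,b1)\<in>M" "(y2,b2)\<in>M"
      "x = y1 + t1 *\<^sub>R x0" "a = b1 + t1*a0" "y = y2 + t2 *\<^sub>R x0" "b = b2 + t2*a0"
      unfolding M'_def by blast
    have "(x+y, a+b) = ((y1+y2) + (t1+t2) *\<^sub>R x0, (b1+b2) + (t1+t2)*a0)"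
      using e by (simp add: algebra_simps)
    thus "(x+y, a+b) \<in> M'" unfolding M'_def using add[OF e(1,2)] by blast
  next
    fix r x a assume "(x,a)\<in>M'"
    then obtain y1 b1 t1 where e: "(y1,b1)\<in>M" "x = y1 + t1 *\<^sub>R x0" "a = b1 + t1*a0"
      unfolding M'_def by blast
    have "(r *\<^sub>R x, r*a) = (r *\<^sub>R y1 + (r*t1) *\<^sub>R x0, r*b1 + (r*t1)*a0)"
      using e by (simp add: algebra_simps)
    thus "(r *\<^sub>R x, r*a) \<in> M'" unfolding M'_def using scl[OF e(1)] by blast
  next
    fix x a assume "(x,a)\<in>M'"
    then obtain y b t where e: "(y,b)\<in>M" "x = y + t *\<^sub>R x0" "a = b + t*a0"
      unfolding M'_def by blast
    show "a \<le> c * norm x"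
    proof (cases t "0::real" rule: linorder_cases)
      case equal thus ?thesis using e dom by simp
    next
      case greater
      have "a0 \<le> c * norm ((1/t) *\<^sub>R y + x0) - (1/t) * b" using P2[OF scl[OF e(1), of "1/t"]] .
      hence "t * a0 \<le> t * (c * norm ((1/t) *\<^sub>R y + x0) - (1/t) * b)"
        using greater by (simp add: mult_left_mono)
      also have "t * (c * norm ((1/t) *\<^sub>R y + x0) - (1/t) * b) = c * (t * norm ((1/t) *\<^sub>R y + x0)) - b"
        using greater by (simp add: algebra_simps)
      also have "t * norm ((1/t) *\<^sub>R y + x0) = norm (t *\<^sub>R ((1/t) *\<^sub>R y + x0))"
        using greater by simp
      also have "t *\<^sub>R ((1/t) *\<^sub>R y + x0) = x" using greater e by (simp add: algebra_simps)
      finally show ?thesis using e by simp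
    next
      case less
      define s where "s = -t"
      have s: "s > 0" using less s_def by simp
      have "(1/s) * b - c * norm ((1/s) *\<^sub>R y - x0) \<le> a0" using P1[OF scl[OF e(1), of "1/s"]] .
      hence "s * ((1/s) * b - c * norm ((1/s) *\<^sub>R y - x0)) \<le> s * a0"
        using s by (simp add: mult_left_mono)
      also have "s * ((1/s) * b - c * norm ((1/s) *\<^sub>R y - x0)) = b - c * (s * norm ((1/s) *\<^sub>R y - x0))"
        using s by (simp add: algebra_simps)
      also have "s * norm ((1/s) *\<^sub>R y - x0) = norm (s *\<^sub>R ((1/s) *\<^sub>R y - x0))"
        using s by simp
      also have "s *\<^sub>R ((1/s) *\<^sub>R y - x0) = x" using s e s_def by (simp add: algebra_simps)
      finally show ?thesis using e s_def by simp
    qed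
  next
    fix x assume "x \<in> V"
    thus "(x, f x) \<in> M'" using MM' inV by blast
  qed
  moreover have "M \<noteq> M'" using new x0 by blast
  ultimately show ?thesis using MM' by blast
qed

lemma real_HB:
  fixes f :: "'a::real_normed_vector \<Rightarrow> real"
  assumes V0: "0 \<in> V" and Vadd: "\<forall>x\<in>V. \<forall>y\<in>V. x+y \<in> V" and Vscl: "\<forall>r. \<forall>x\<in>V. r *\<^sub>R x \<in> V"
    and fadd: "\<forall>x\<in>V. \<forall>y\<in>V. f (x+y) = f x + f y" and fscl: "\<forall>r. \<forall>x\<in>V. f (r *\<^sub>R x) = r * f x"
    and fdom: "\<forall>x\<in>V. f x \<le> c * norm x" and c: "c \<ge> 0"
  shows "\<exists>g. (\<forall>x y. g (x+y) = g x + g y) \<and> (\<forall>r x. g (r *\<^sub>R x) = r * g x)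
           \<and> (\<forall>x\<in>V. g x = f x) \<and> (\<forall>x. g x \<le> c * norm x)"
proof -
  define A where "A = {G. okG c V f G}"
  have "{(x, f x) | x. x \<in> V} \<in> A"
    unfolding A_def okG_def using Vadd Vscl fadd fscl fdom by auto
  hence Ane: "A \<noteq> {}" by blast
  have "\<exists>M\<in>A. \<forall>X\<in>A. M \<subseteq> X \<longrightarrow> X = M"
  proof (rule subset_Zorn_nonempty[OF Ane])
    fix C assume Cne: "C \<noteq> {}" and ch: "subset.chain A C"
    have CA: "C \<subseteq> A" and cmp: "\<And>X Y. X\<in>C \<Longrightarrow> Y\<in>C \<Longrightarrow> X \<subseteq> Y \<or> Y \<subseteq> X"
      using ch unfolding subset.chain_def by auto
    have okC: "\<And>X. X \<in> C \<Longrightarrow> okG c V f X" using CA A_def by auto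
    have two: "\<exists>Z\<in>C. p \<in> Z \<and> q \<in> Z" if pq: "p \<in> \<Union>C" "q \<in> \<Union>C" for p q
    proof -
      obtain X Y where "X\<in>C" "Y\<in>C" "p\<in>X" "q\<in>Y" using pq by blast
      thus ?thesis using cmp[of X Y] by blast
    qed
    show "\<Union>C \<in> A" unfolding A_def mem_Collect_eq okG_def
    proof (intro conjI allI impI ballI)
      fix x a b assume "(x,a)\<in>\<Union>C" "(x,b)\<in>\<Union>C"
      then obtain Z where "Z\<in>C" "(x,a)\<in>Z" "(x,b)\<in>Z" using two by blast
      thus "a = b" using okC unfolding okG_def by blast
    next
      fix x a y b assume "(x,a)\<in>\<Union>C" "(y,b)\<in>\<Union>C"
      then obtain Z where "Z\<in>C" "(x,a)\<in>Z" "(y,b)\<in>Z" using two by blast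
      thus "(x+y,a+b)\<in>\<Union>C" using okC unfolding okG_def by blast
    next
      fix r x a assume "(x,a)\<in>\<Union>C"
      then obtain Z where "Z\<in>C" "(x,a)\<in>Z" by blast
      thus "(r *\<^sub>R x, r*a)\<in>\<Union>C" using okC unfolding okG_def by blast
    next
      fix x a assume "(x,a)\<in>\<Union>C"
      then obtain Z where "Z\<in>C" "(x,a)\<in>Z" by blast
      thus "a \<le> c * norm x" using okC unfolding okG_def by blast
    next
      fix x assume "x \<in> V"
      obtain Z where "Z \<in> C" using Cne by blast
      thus "(x, f x) \<in> \<Union>C" using okC \<open>x\<in>V\<close> unfolding okG_def by blast
    qed
  qed
  then obtain M where MA: "okG c V f M" and maxM: "\<And>X. okG c V f X \<Longrightarrow> M \<subseteq> X \<Longrightarrow> X = M"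
    unfolding A_def by blast
  have tot: "\<exists>a. (x,a) \<in> M" for x
  proof (rule ccontr)
    assume "\<not> ?thesis"
    then obtain M' where "okG c V f M'" "M \<subset> M'" using okG_ext[OF MA c V0] by blast
    thus False using maxM by blast
  qed
  have funM: "\<And>x a b. (x,a)\<in>M \<Longrightarrow> (x,b)\<in>M \<Longrightarrow> a=b"
   and add: "\<And>x a y b. (x,a)\<in>M \<Longrightarrow> (y,b)\<in>M \<Longrightarrow> (x+y,a+b)\<in>M"
   and scl: "\<And>r x a. (x,a)\<in>M \<Longrightarrow> (r *\<^sub>R x, r*a)\<in>M"
   and dom: "\<And>x a. (x,a)\<in>M \<Longrightarrow> a \<le> c * norm x"
   and inV: "\<And>x. x\<in>V \<Longrightarrow> (x, f x) \<in> M"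
    using MA unfolding okG_def by blast+
  define g where "g x = (SOME a. (x,a) \<in> M)" for x
  have gM: "(x, g x) \<in> M" for x unfolding g_def using tot[of x] by (rule someI_ex)
  have gu: "(x, a) \<in> M \<Longrightarrow> g x = a" for x a using funM gM by blast
  show ?thesis
  proof (intro exI conjI allI ballI)
    show "g (x+y) = g x + g y" for x y using gu[OF add[OF gM gM]] .
    show "g (r *\<^sub>R x) = r * g x" for r x using gu[OF scl[OF gM]] .
    show "g x = f x" if "x\<in>V" for x using gu[OF inV[OF that]] .
    show "g x \<le> c * norm x" for x using dom[OF gM] .
  qed
qed



context
  fixes smul :: "complex \<Rightarrow> 'a::real_normed_vector \<Rightarrow> 'a"
  assumes cs: "complex_normed_structure smul"
begin

lemma sm_real: "smul (complex_of_real r) x = r *\<^sub>R x"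
  and sm_addl: "smul (a + b) x = smul a x + smul b x"
  and sm_addr: "smul a (x + y) = smul a x + smul a y"
  and sm_assoc: "smul (a * b) x = smul a (smul b x)"
  and sm_norm: "norm (smul a x) = cmod a * norm x"
  using cs unfolding complex_normed_structure_def by blast+

lemma sm_one: "smul 1 x = x" using sm_real[of 1] by simp
lemma sm_zero: "smul 0 x = 0" using sm_real[of 0] by simp
lemma sm_diffl: "smul (a - b) x = smul a x - smul b x"
  using sm_addl[of "a-b" b x] by (simp add: eq_diff_eq)
lemma sm_scaleR: "smul c (r *\<^sub>R x) = r *\<^sub>R smul c x"
  by (metis mult.commute sm_assoc sm_real)
lemma sm_Complex: "smul (Complex a b) x = a *\<^sub>R x + b *\<^sub>R smul \<i> x"
proof -
  have "Complex a b = complex_of_real a + complex_of_real b * \<i>" by (simp add: Complex_eq)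
  thus ?thesis by (simp add: sm_addl sm_assoc sm_real)
qed

lemma cdual_bl: "\<psi> \<in> cdual smul \<Longrightarrow> bounded_linear \<psi>"
proof -
  assume "\<psi> \<in> cdual smul"
  then have a: "\<And>x y. \<psi> (x + y) = \<psi> x + \<psi> y" and h: "\<And>c x. \<psi> (smul c x) = c * \<psi> x"
    and "\<exists>K. \<forall>x. cmod (\<psi> x) \<le> K * norm x" unfolding cdual_def by auto
  then obtain K where K: "\<And>x. cmod (\<psi> x) \<le> K * norm x" by blast
  show ?thesis
  proof (rule bounded_linear_intro[of _ K])
    show "\<psi> (x + y) = \<psi> x + \<psi> y" for x y by (rule a)
    show "\<psi> (r *\<^sub>R x) = r *\<^sub>R \<psi> x" for r x
      using h[of "complex_of_real r" x] by (simp add: sm_real scaleR_conv_of_real)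
    show "norm (\<psi> x) \<le> norm x * K" for x using K[of x] by (simp add: mult.commute)
  qed
qed

lemma cdual_diff: "\<phi> \<in> cdual smul \<Longrightarrow> \<psi> \<in> cdual smul \<Longrightarrow> (\<lambda>x. \<phi> x - \<psi> x) \<in> cdual smul"
proof -
  assume p: "\<phi> \<in> cdual smul" and q: "\<psi> \<in> cdual smul"
  then obtain K1 K2 where K1: "\<And>x. cmod (\<phi> x) \<le> K1 * norm x" and K2: "\<And>x. cmod (\<psi> x) \<le> K2 * norm x"
    unfolding cdual_def by blast
  have "cmod (\<phi> x - \<psi> x) \<le> (K1 + K2) * norm x" for x
    using norm_triangle_ineq4[of "\<phi> x" "\<psi> x"] K1[of x] K2[of x] by (simp add: distrib_right)
  hence "\<exists>K. \<forall>x. cmod (\<phi> x - \<psi> x) \<le> K * norm x" by blast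
  thus ?thesis using p q unfolding cdual_def by (auto simp: algebra_simps)
qed

lemma complex_HB:
  fixes \<phi> :: "'a \<Rightarrow> complex"
  assumes V0: "0 \<in> V" and Vadd: "\<forall>x\<in>V. \<forall>y\<in>V. x+y \<in> V" and Vscl: "\<forall>c. \<forall>x\<in>V. smul c x \<in> V"
    and padd: "\<forall>x\<in>V. \<forall>y\<in>V. \<phi> (x+y) = \<phi> x + \<phi> y" and pscl: "\<forall>c. \<forall>x\<in>V. \<phi> (smul c x) = c * \<phi> x"
    and pdom: "\<forall>x\<in>V. cmod (\<phi> x) \<le> C * norm x" and C: "C \<ge> 0"
  shows "\<exists>\<psi>\<in>cdual smul. (\<forall>x\<in>V. \<psi> x = \<phi> x) \<and> (\<forall>x. cmod (\<psi> x) \<le> C * norm x)"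
proof -
  have "\<exists>g. (\<forall>x y. g (x+y) = g x + g y) \<and> (\<forall>r x. g (r *\<^sub>R x) = r * g x)
           \<and> (\<forall>x\<in>V. g x = Re (\<phi> x)) \<and> (\<forall>x. g x \<le> C * norm x)"
  proof (rule real_HB[OF V0 Vadd _ _ _ _ C])
    show "\<forall>r. \<forall>x\<in>V. r *\<^sub>R x \<in> V" using Vscl by (metis sm_real)
    show "\<forall>x\<in>V. \<forall>y\<in>V. Re (\<phi> (x + y)) = Re (\<phi> x) + Re (\<phi> y)" using padd by simp
    show "\<forall>r. \<forall>x\<in>V. Re (\<phi> (r *\<^sub>R x)) = r * Re (\<phi> x)"
      using pscl by (simp add: sm_real[symmetric])
    show "\<forall>x\<in>V. Re (\<phi> x) \<le> C * norm x" using pdom complex_Re_le_cmod order_trans by blast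
  qed
  then obtain g where ga: "\<And>x y. g (x+y) = g x + g y" and gs: "\<And>r x. g (r *\<^sub>R x) = r * g x"
    and gV: "\<And>x. x\<in>V \<Longrightarrow> g x = Re (\<phi> x)" and gd: "\<And>x. g x \<le> C * norm x" by blast
  define \<psi> where "\<psi> x = Complex (g x) (- g (smul \<i> x))" for x
  have gC: "g (smul (Complex a b) x) = a * g x + b * g (smul \<i> x)" for a b x
    by (simp add: sm_Complex ga gs)
  have padd': "\<psi> (x + y) = \<psi> x + \<psi> y" for x y
    by (simp add: \<psi>_def ga sm_addr complex_eq_iff)
  have pscl': "\<psi> (smul c x) = c * \<psi> x" for c x
  proof -
    obtain a b where c: "c = Complex a b" by (metis complex.exhaust)
    have "\<i> * c = Complex (-b) a" using c by (simp add: complex_eq_iff)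
    hence "smul \<i> (smul (Complex a b) x) = smul (Complex (-b) a) x" unfolding c by (simp add: sm_assoc[symmetric])
    hence h2: "g (smul \<i> (smul (Complex a b) x)) = -b * g x + a * g (smul \<i> x)" using gC[of "-b" a x] by simp
    have h1: "g (smul (Complex a b) x) = a * g x + b * g (smul \<i> x)" using gC[of a b x] by simp
    show ?thesis unfolding \<psi>_def c using h1 h2 by (simp add: complex_eq_iff algebra_simps)
  qed
  have pV: "\<psi> x = \<phi> x" if "x \<in> V" for x
  proof -
    have "smul \<i> x \<in> V" using Vscl that by blast
    thus ?thesis using that gV pscl by (simp add: \<psi>_def complex_eq_iff)
  qed
  have pRe: "Re (\<psi> x) = g x" for x by (simp add: \<psi>_def)
  have pdom': "cmod (\<psi> x) \<le> C * norm x" for x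
  proof (cases "\<psi> x = 0")
    case True thus ?thesis using C by simp
  next
    case False
    define z where "z = \<psi> x"
    define u where "u = cnj z / complex_of_real (cmod z)"
    have u1: "cmod u = 1" using False by (simp add: u_def z_def norm_divide)
    have zz: "cmod z \<noteq> 0" using False z_def by simp
    have "u * z = (z * cnj z) / complex_of_real (cmod z)" by (simp add: u_def mult.commute)
    also have "\<dots> = complex_of_real ((cmod z)^2 / cmod z)" by (simp add: complex_norm_square[symmetric])
    also have "(cmod z)^2 / cmod z = cmod z" using zz by (simp add: power2_eq_square)
    finally have "u * z = complex_of_real (cmod z)" .
    hence "\<psi> (smul u x) = complex_of_real (cmod z)" using pscl' z_def by simp
    hence "cmod z = g (smul u x)" using pRe by (metis Re_complex_of_real)
    also have "\<dots> \<le> C * norm (smul u x)" by (rule gd)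
    also have "\<dots> = C * norm x" by (simp add: sm_norm u1)
    finally show ?thesis by (simp add: z_def)
  qed
  have "\<psi> \<in> cdual smul" unfolding cdual_def using padd' pscl' pdom' by blast
  thus ?thesis using pV pdom' by blast
qed

end


context
  fixes smul :: "complex \<Rightarrow> 'a::real_normed_vector \<Rightarrow> 'a"
  assumes cs: "complex_normed_structure smul"
begin

lemma dd_iff:
  assumes p: "\<phi> \<in> cdual smul" and W: "W \<in> MaxA smul" and r: "r > 0"
  shows "r < dual_dist \<phi> (annih smul W) \<longleftrightarrow> (\<exists>w\<in>W. r * norm w < cmod (\<phi> w))"
proof -
  define S where "S = {onorm (\<lambda>x. \<phi> x - \<psi> x) | \<psi>. \<psi> \<in> annih smul W}"
  have dd: "dual_dist \<phi> (annih smul W) = Inf S" unfolding dual_dist_def S_def ..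
  have bl: "bounded_linear (\<lambda>x. \<phi> x - \<psi> x)" if "\<psi> \<in> annih smul W" for \<psi>
    using that cdual_bl[OF cs] cdual_diff[OF cs p] unfolding annih_def by blast
  have z: "(\<lambda>x. 0) \<in> annih smul W" unfolding annih_def cdual_def by (auto intro: exI[of _ 0])
  hence Sne: "S \<noteq> {}" unfolding S_def by blast
  have Sbd: "bdd_below S" unfolding S_def bdd_below_def using bl onorm_pos_le by blast
  have pbl: "bounded_linear \<phi>" using cdual_bl[OF cs p] .
  show ?thesis
  proof
    assume "\<exists>w\<in>W. r * norm w < cmod (\<phi> w)"
    then obtain w where w: "w \<in> W" "r * norm w < cmod (\<phi> w)" by blast
    have "w \<noteq> 0" using w pbl by (auto simp: linear_simps)
    hence nw: "norm w > 0" by simp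
    have "cmod (\<phi> w) / norm w \<le> e" if "e \<in> S" for e
    proof -
      obtain \<psi> where \<psi>: "\<psi> \<in> annih smul W" "e = onorm (\<lambda>x. \<phi> x - \<psi> x)" using \<open>e\<in>S\<close> S_def by blast
      have "\<psi> w = 0" using \<psi> w unfolding annih_def by blast
      hence "cmod (\<phi> w) \<le> e * norm w" using onorm[OF bl[OF \<psi>(1)], of w] \<psi>(2) by simp
      thus ?thesis using nw by (simp add: divide_le_eq)
    qed
    hence "cmod (\<phi> w) / norm w \<le> Inf S" using Sne by (intro cInf_greatest) auto
    moreover have "r < cmod (\<phi> w) / norm w" using w nw by (simp add: less_divide_eq)
    ultimately show "r < dual_dist \<phi> (annih smul W)" using dd by simp
  next
    assume lt: "r < dual_dist \<phi> (annih smul W)"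
    show "\<exists>w\<in>W. r * norm w < cmod (\<phi> w)"
    proof (rule ccontr)
      assume "\<not> ?thesis"
      hence le: "\<forall>w\<in>W. cmod (\<phi> w) \<le> r * norm w" by (simp add: not_less)
      have Wp: "0 \<in> W" "\<forall>x\<in>W. \<forall>y\<in>W. x+y \<in> W" "\<forall>c. \<forall>x\<in>W. smul c x \<in> W"
        using W unfolding MaxA_def by auto
      have pl: "\<forall>x\<in>W. \<forall>y\<in>W. \<phi> (x+y) = \<phi> x + \<phi> y" "\<forall>c. \<forall>x\<in>W. \<phi> (smul c x) = c * \<phi> x"
        using p unfolding cdual_def by auto
      obtain \<psi>' where \<psi>': "\<psi>' \<in> cdual smul" "\<forall>x\<in>W. \<psi>' x = \<phi> x" "\<forall>x. cmod (\<psi>' x) \<le> r * norm x"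
        using complex_HB[OF cs Wp pl le] r by auto
      define \<psi> where "\<psi> = (\<lambda>x. \<phi> x - \<psi>' x)"
      have "\<psi> \<in> annih smul W" unfolding annih_def \<psi>_def using cdual_diff[OF cs p \<psi>'(1)] \<psi>'(2) by auto
      hence "onorm (\<lambda>x. \<phi> x - \<psi> x) \<in> S" unfolding S_def by blast
      hence "Inf S \<le> onorm (\<lambda>x. \<phi> x - \<psi> x)" using Sbd by (intro cInf_lower)
      also have "(\<lambda>x. \<phi> x - \<psi> x) = \<psi>'" unfolding \<psi>_def by auto
      also have "onorm \<psi>' \<le> r" using \<psi>'(3) r by (intro onorm_bound) auto
      finally show False using lt dd by simp
    qed
  qed
qed

end


context
  fixes smul :: "complex \<Rightarrow> 'a::real_normed_vector \<Rightarrow> 'a"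
  assumes cs: "complex_normed_structure smul"
begin

lemma norming:
  assumes v: "v \<noteq> 0"
  shows "\<exists>\<phi>\<in>cdual smul. \<phi> v = complex_of_real (norm v) \<and> (\<forall>x. cmod (\<phi> x) \<le> norm x)"
proof -
  have inj: "c = c'" if "smul c v = smul c' v" for c c'
  proof -
    have "norm (smul (c - c') v) = 0" using that by (simp add: sm_diffl[OF cs])
    thus ?thesis using v by (simp add: sm_norm[OF cs])
  qed
  define V where "V = range (\<lambda>c. smul c v)"
  define \<phi>0 where "\<phi>0 x = (THE c. x = smul c v) * complex_of_real (norm v)" for x
  have \<phi>0: "\<phi>0 (smul c v) = c * complex_of_real (norm v)" for c
  proof -
    have "(THE c'. smul c v = smul c' v) = c" using inj by (intro the_equality) auto
    thus ?thesis by (simp add: \<phi>0_def)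
  qed
  have "\<exists>\<psi>\<in>cdual smul. (\<forall>x\<in>V. \<psi> x = \<phi>0 x) \<and> (\<forall>x. cmod (\<psi> x) \<le> 1 * norm x)"
  proof (rule complex_HB[OF cs])
    show "0 \<in> V" unfolding V_def using sm_zero[OF cs] by (metis rangeI)
    show "\<forall>x\<in>V. \<forall>y\<in>V. x + y \<in> V" unfolding V_def by (auto simp: sm_addl[OF cs, symmetric])
    show "\<forall>c. \<forall>x\<in>V. smul c x \<in> V" unfolding V_def by (auto simp: sm_assoc[OF cs, symmetric])
    show "\<forall>x\<in>V. \<forall>y\<in>V. \<phi>0 (x + y) = \<phi>0 x + \<phi>0 y" unfolding V_def
      by (auto simp: sm_addl[OF cs, symmetric] \<phi>0 distrib_right)
    show "\<forall>c. \<forall>x\<in>V. \<phi>0 (smul c x) = c * \<phi>0 x" unfolding V_def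
      by (auto simp: sm_assoc[OF cs, symmetric] \<phi>0)
    show "\<forall>x\<in>V. cmod (\<phi>0 x) \<le> 1 * norm x" unfolding V_def
      by (auto simp: \<phi>0 sm_norm[OF cs] norm_mult)
  qed simp
  then obtain \<psi> where "\<psi>\<in>cdual smul" "\<forall>x\<in>V. \<psi> x = \<phi>0 x" "\<forall>x. cmod (\<psi> x) \<le> norm x" by auto
  moreover have "v \<in> V" unfolding V_def using sm_one[OF cs] by (metis rangeI)
  moreover have "\<phi>0 v = complex_of_real (norm v)" using \<phi>0[of 1] sm_one[OF cs] by simp
  ultimately show ?thesis by metis
qed

lemma key:
  assumes luc: "loc_unif_convex TYPE('a)" and U: "open U" "v \<in> U" and v: "v \<noteq> 0"
  shows "\<exists>\<phi>\<in>cdual smul. \<exists>r>0. r * norm v < cmod (\<phi> v) \<and>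
            (\<forall>w. r * norm w < cmod (\<phi> w) \<longrightarrow> (\<exists>c. smul c w \<in> U))"
proof -
  obtain \<phi> where p: "\<phi> \<in> cdual smul" and pv: "\<phi> v = complex_of_real (norm v)"
    and pb: "\<And>x. cmod (\<phi> x) \<le> norm x" using norming[OF v] by blast
  have padd: "\<phi> (x + y) = \<phi> x + \<phi> y" for x y using p unfolding cdual_def by blast
  have pscl: "\<phi> (smul c x) = c * \<phi> x" for c x using p unfolding cdual_def by blast
  obtain e where e: "e > 0" "ball v e \<subseteq> U" using U open_contains_ball by blast
  have nv: "norm v > 0" using v by simp
  have "\<exists>\<delta>>0. \<delta> < 1 \<and> (\<forall>u. norm u = norm v \<longrightarrow> (1-\<delta>) * norm v < Re (\<phi> u) \<longrightarrow> dist v u < e)"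
  proof (rule ccontr)
    assume "\<not> ?thesis"
    hence H: "\<And>\<delta>. \<delta> > 0 \<Longrightarrow> \<delta> < 1 \<Longrightarrow> \<exists>u. norm u = norm v \<and> (1-\<delta>) * norm v < Re (\<phi> u) \<and> \<not> dist v u < e"
      by blast
    have "\<forall>n::nat. \<exists>u. norm u = norm v \<and> (1 - inverse (real (Suc n)) / 2) * norm v < Re (\<phi> u) \<and> \<not> dist v u < e"
    proof
      fix n :: nat
      have "inverse (real (Suc n)) / 2 > 0" "inverse (real (Suc n)) / 2 < 1" by (auto simp: field_simps)
      thus "\<exists>u. norm u = norm v \<and> (1 - inverse (real (Suc n)) / 2) * norm v < Re (\<phi> u) \<and> \<not> dist v u < e"
        by (rule H)
    qed
    then obtain u where u: "\<And>n. norm (u n) = norm v"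
       "\<And>n. (1 - inverse (real (Suc n)) / 2) * norm v < Re (\<phi> (u n))"
       "\<And>n. \<not> dist v (u n) < e"
      by metis
    define d where "d n = inverse (real (Suc n)) / 2" for n
    have d0: "d \<longlonglongrightarrow> 0" unfolding d_def using tendsto_divide[OF LIMSEQ_inverse_real_of_nat tendsto_const, of 2] by simp
    have dpos: "0 \<le> d n" "d n \<le> 1" for n unfolding d_def by (auto simp: field_simps)
    have lo: "(2 - d n) * norm v \<le> norm (v + u n)" for n
    proof -
      have "(2 - d n) * norm v < norm v + Re (\<phi> (u n))" using u(2)[of n] unfolding d_def by (simp add: algebra_simps)
      also have "\<dots> = Re (\<phi> (v + u n))" by (simp add: padd pv)
      also have "\<dots> \<le> norm (v + u n)" using complex_Re_le_cmod pb order_trans by blast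
      finally show ?thesis by simp
    qed
    have up: "norm (v + u n) \<le> 2 * norm v" for n using norm_triangle_ineq[of v "u n"] u(1)[of n] by simp
    define q where "q n = 2 * (norm v)\<^sup>2 + 2 * (norm (u n))\<^sup>2 - (norm (v + u n))\<^sup>2" for n
    have q0: "0 \<le> q n" for n
    proof -
      have "(norm (v + u n))\<^sup>2 \<le> (2 * norm v)\<^sup>2" using up[of n] by (intro power_mono) auto
      thus ?thesis unfolding q_def using u(1)[of n] by (simp add: power2_eq_square)
    qed
    have q1: "q n \<le> (norm v)\<^sup>2 * (4 - (2 - d n)\<^sup>2)" for n
    proof -
      have "((2 - d n) * norm v)\<^sup>2 \<le> (norm (v + u n))\<^sup>2" using lo[of n] dpos[of n] nv
        by (intro power_mono) auto
      thus ?thesis unfolding q_def using u(1)[of n] by (simp add: power2_eq_square algebra_simps)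
    qed
    have "(\<lambda>n. (norm v)\<^sup>2 * (4 - (2 - d n)\<^sup>2)) \<longlonglongrightarrow> (norm v)\<^sup>2 * (4 - (2 - 0)\<^sup>2)"
      by (intro tendsto_intros d0)
    hence lim: "(\<lambda>n. (norm v)\<^sup>2 * (4 - (2 - d n)\<^sup>2)) \<longlonglongrightarrow> 0" by simp
    have "q \<longlonglongrightarrow> 0"
      by (rule tendsto_sandwich[OF _ _ tendsto_const lim]) (use q0 q1 in auto)
    hence "(\<lambda>n. norm (v - u n)) \<longlonglongrightarrow> 0" using luc unfolding loc_unif_convex_def q_def by blast
    hence "eventually (\<lambda>n. norm (v - u n) < e) sequentially" using e(1) by (rule order_tendstoD(2))
    then obtain n where "norm (v - u n) < e" by (meson eventually_sequentially le_refl)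
    thus False using u(3)[of n] by (simp add: dist_norm)
  qed
  then obtain \<delta> where \<delta>: "\<delta> > 0" "\<delta> < 1"
    and cl: "\<And>u. norm u = norm v \<Longrightarrow> (1-\<delta>) * norm v < Re (\<phi> u) \<Longrightarrow> dist v u < e" by blast
  show ?thesis
  proof (intro bexI[OF _ p] exI[of _ "1-\<delta>"] conjI allI impI)
    show "0 < 1 - \<delta>" using \<delta> by simp
    show "(1 - \<delta>) * norm v < cmod (\<phi> v)" using pv nv \<delta> by simp
    fix w assume w: "(1 - \<delta>) * norm w < cmod (\<phi> w)"
    define z where "z = \<phi> w"
    have zn: "cmod z > 0" using w \<delta> z_def
      by (smt (verit, ccfv_SIG) mult_nonneg_nonneg norm_ge_zero)
    have wn: "norm w > 0"
    proof -
      have "w \<noteq> 0" using zn z_def cdual_bl[OF cs p] by (auto simp: linear_simps)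
      thus ?thesis by simp
    qed
    define c where "c = complex_of_real (norm v / norm w) * cnj z / complex_of_real (cmod z)"
    have cm: "cmod c = norm v / norm w" using zn wn nv by (simp add: c_def norm_mult norm_divide)
    have nu: "norm (smul c w) = norm v" using wn by (simp add: sm_norm[OF cs] cm)
    have "c * z = complex_of_real (norm v / norm w) * (z * cnj z) / complex_of_real (cmod z)"
      by (simp add: c_def)
    also have "\<dots> = complex_of_real (norm v / norm w * ((cmod z)^2 / cmod z))"
      by (simp add: complex_norm_square[symmetric])
    also have "(cmod z)^2 / cmod z = cmod z" using zn by (simp add: power2_eq_square)
    finally have "Re (\<phi> (smul c w)) = norm v / norm w * cmod z" by (simp add: pscl z_def)
    moreover have "(1-\<delta>) * norm v < norm v / norm w * cmod z"
    proof -
      have "(1-\<delta>) < cmod z / norm w" using w wn z_def by (simp add: less_divide_eq)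
      hence "(1-\<delta>) * norm v < cmod z / norm w * norm v" by (rule mult_strict_right_mono[OF _ nv])
      thus ?thesis by (simp add: mult.commute)
    qed
    ultimately have "dist v (smul c w) < e" using cl nu by simp
    thus "\<exists>c. smul c w \<in> U" using e(2) by auto
  qed
qed

end


lemma gen_mono:
  assumes "\<forall>s\<in>S. generate_topology_on T s" and "generate_topology_on S a"
  shows "generate_topology_on T a"
  using assms(2) by induct (auto intro: generate_topology_on.intros assms(1)[rule_format])

theorem lemma7p23:
  fixes smul :: "complex \<Rightarrow> 'a::real_normed_vector \<Rightarrow> 'a"
  assumes "complex_normed_structure smul"
    and "loc_unif_convex TYPE('a)"
  shows "topology_on_generated (MaxA smul) {{V \<in> MaxA smul. V \<inter> U \<noteq> {}} | U. open U}
       = topology_on_generated (MaxA smul)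
           {{V \<in> MaxA smul. dual_dist \<phi> (annih smul V) > r} | \<phi> r. \<phi> \<in> cdual smul \<and> r > 0}"
proof -
  note cs = assms(1)
  define X where "X = MaxA smul"
  define S1 where "S1 = {{V \<in> MaxA smul. V \<inter> U \<noteq> {}} | U. open U}"
  define S2 where "S2 = {{V \<in> MaxA smul. dual_dist \<phi> (annih smul V) > r} | \<phi> r. \<phi> \<in> cdual smul \<and> r > 0}"
  have A: "\<forall>s\<in>insert X S2. generate_topology_on (insert X S1) s"
  proof
    fix s assume "s \<in> insert X S2"
    then consider "s = X" | \<phi> r where "\<phi> \<in> cdual smul" "r > 0"
        "s = {V \<in> MaxA smul. dual_dist \<phi> (annih smul V) > r}"
      unfolding S2_def by blast
    thus "generate_topology_on (insert X S1) s"
    proof cases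
      case 1 thus ?thesis by (auto intro: generate_topology_on.Basis)
    next
      case 2
      define U where "U = {x. r * norm x < cmod (\<phi> x)}"
      have c\<phi>: "continuous_on UNIV \<phi>" using linear_continuous_on[OF cdual_bl[OF cs 2(1)]] .
      have oU: "open U" unfolding U_def by (intro open_Collect_less continuous_intros c\<phi>)
      have "s = {V \<in> MaxA smul. V \<inter> U \<noteq> {}}"
        using 2 dd_iff[OF cs 2(1) _ 2(2)] unfolding U_def by auto
      hence "s \<in> S1" unfolding S1_def using oU by blast
      thus ?thesis by (auto intro: generate_topology_on.Basis)
    qed
  qed
  have B: "\<forall>s\<in>insert X S1. generate_topology_on (insert X S2) s"
  proof
    fix s assume "s \<in> insert X S1"
    then consider "s = X" | U where "open U" "s = {V \<in> MaxA smul. V \<inter> U \<noteq> {}}"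
      unfolding S1_def by blast
    thus "generate_topology_on (insert X S2) s"
    proof cases
      case 1 thus ?thesis by (auto intro: generate_topology_on.Basis)
    next
      case 2
      show ?thesis
      proof (cases "0 \<in> U")
        case True
        hence "s = X" using 2 unfolding X_def MaxA_def by auto
        thus ?thesis by (auto intro: generate_topology_on.Basis)
      next
        case False
        have "s = \<Union>{N \<in> S2. N \<subseteq> s}"
        proof
          show "\<Union>{N \<in> S2. N \<subseteq> s} \<subseteq> s" by blast
          show "s \<subseteq> \<Union>{N \<in> S2. N \<subseteq> s}"
          proof
            fix V assume "V \<in> s"
            then obtain v where V: "V \<in> MaxA smul" "v \<in> V" "v \<in> U" using 2 by blast
            hence "v \<noteq> 0" using False by auto
            then obtain \<phi> r where p: "\<phi> \<in> cdual smul" "r > 0" "r * norm v < cmod (\<phi> v)"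
              and pw: "\<And>w. r * norm w < cmod (\<phi> w) \<Longrightarrow> \<exists>c. smul c w \<in> U"
              using key[OF cs assms(2) 2(1) V(3)] by blast
            define N where "N = {W \<in> MaxA smul. dual_dist \<phi> (annih smul W) > r}"
            have "N \<in> S2" unfolding N_def S2_def using p by blast
            moreover have "V \<in> N" unfolding N_def using V p dd_iff[OF cs p(1) V(1) p(2)] by blast
            moreover have "N \<subseteq> s"
            proof
              fix W assume "W \<in> N"
              hence W: "W \<in> MaxA smul" and "\<exists>w\<in>W. r * norm w < cmod (\<phi> w)"
                unfolding N_def using dd_iff[OF cs p(1) _ p(2)] by auto
              then obtain w c where "w \<in> W" "smul c w \<in> U" using pw by blast
              moreover have "smul c w \<in> W" using W \<open>w\<in>W\<close> unfolding MaxA_def by blast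
              ultimately show "W \<in> s" using 2 W by blast
            qed
            ultimately show "V \<in> \<Union>{N \<in> S2. N \<subseteq> s}" by blast
          qed
        qed
        moreover have "generate_topology_on (insert X S2) (\<Union>{N \<in> S2. N \<subseteq> s})"
          by (rule generate_topology_on.UN) (auto intro: generate_topology_on.Basis)
        ultimately show ?thesis by simp
      qed
    qed
  qed
  show ?thesis
    unfolding topology_on_generated_def topology_eq openin_topology_generated_by_iff
    using gen_mono[OF A[unfolded S1_def S2_def X_def]] gen_mono[OF B[unfolded S1_def S2_def X_def]]
    by blast
qed


end
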